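(* Let $F$ be any finite subset of $\mathbb{N}$ and $a_k$ a positive integer for each $k \in F$. Then there exist a continuous map $f : \mathbb{R}^2 \to \mathbb{R}^2$ and a fixed point $p$ of $f$ such that $\{p\}$ is an isolated invariant set and $$i(f^n,p) = 1 - \sum_{k \in F,\ k\mid n} k\,a_k \quad \text{for every } n \ge 1,$$ i.e. $\{i(f^n,p)\}_{n\ge1} = \sigma^1 - \sum_{k\in F} a_k\sigma^k$.
   Context: $i(g,p)$ is the fixed point index; $\sigma^k_n = k$ if $k\mid n$ and $0$ otherwise. $\{p\}$ is an isolated invariant set if there is a compact $N$ with $\{p\} = \mathrm{Inv}(f,N) \subset \mathrm{int}(N)$, where $\mathrm{Inv}(f,N)$ is the set of $x \in N$ admitting a sequence $(x_n)_{n\in\mathbb{Z}}\subset N$ with $x_0=x$, $f(x_n)=x_{n+1}$. *)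

theory Defs
  imports "HOL-Analysis.Analysis"
begin

text \<open>The plane R^2 is identified with the complex numbers.\<close>

definition winding_lift :: "(real \<Rightarrow> complex) \<Rightarrow> complex \<Rightarrow> real" where
  "winding_lift \<gamma> z = (THE w. \<exists>\<theta>. continuous_on {0..1} \<theta> \<and>
      (\<forall>t\<in>{0..1}. \<gamma> t - z = complex_of_real (cmod (\<gamma> t - z)) * exp (\<i> * complex_of_real (\<theta> t))) \<and>
      w = (\<theta> 1 - \<theta> 0) / (2 * pi))"

definition fp_index :: "(complex \<Rightarrow> complex) \<Rightarrow> complex \<Rightarrow> int" where
  "fp_index g p = (THE k::int. \<exists>\<epsilon>>0. \<forall>r. 0 < r \<and> r < \<epsilon> \<longrightarrow>
      winding_lift (\<lambda>t. let x = p + complex_of_real r * exp (2 * pi * \<i> * complex_of_real t) in x - g x) 0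
        = real_of_int k)"

definition Inv :: "('a \<Rightarrow> 'a) \<Rightarrow> 'a set \<Rightarrow> 'a set" where
  "Inv f N = {x \<in> N. \<exists>s::int \<Rightarrow> 'a. s 0 = x \<and> (\<forall>n. s n \<in> N \<and> f (s n) = s (n + 1))}"

definition isolated_invariant_set :: "('a::topological_space \<Rightarrow> 'a) \<Rightarrow> 'a set \<Rightarrow> bool" where
  "isolated_invariant_set f S \<longleftrightarrow> (\<exists>N. compact N \<and> S = Inv f N \<and> S \<subseteq> interior N)"

end

theory Submission
  imports Defs "HOL-Complex_Analysis.Complex_Analysis"
begin


lemma lift_unique:
  fixes \<gamma> :: "real \<Rightarrow> complex"
  assumes c1: "continuous_on {0..1} \<theta>" and c2: "continuous_on {0..1} \<theta>'"
    and e1: "\<forall>t\<in>{0..1}. \<gamma> t - z = complex_of_real (cmod (\<gamma> t - z)) * exp (\<i> * complex_of_real (\<theta> t))"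
    and e2: "\<forall>t\<in>{0..1}. \<gamma> t - z = complex_of_real (cmod (\<gamma> t - z)) * exp (\<i> * complex_of_real (\<theta>' t))"
    and nz: "\<forall>t\<in>{0..1}. \<gamma> t \<noteq> z"
  shows "\<theta>' 1 - \<theta>' 0 = \<theta> 1 - \<theta> 0"
proof -
  define d where "d t = (\<theta> t - \<theta>' t) / (2*pi)" for t
  have dI: "d t \<in> \<int>" if t: "t \<in> {0..1}" for t
  proof -
    have "cmod (\<gamma> t - z) \<noteq> 0" using nz t by auto
    then have "exp (\<i> * complex_of_real (\<theta> t)) = exp (\<i> * complex_of_real (\<theta>' t))"
      using e1 e2 t by (metis mult_cancel_left of_real_eq_0_iff)
    then have "exp (\<i> * complex_of_real (\<theta> t - \<theta>' t)) = 1"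
      by (simp add: right_diff_distrib exp_diff)
    then obtain n::int where "\<theta> t - \<theta>' t = of_int (2*n) * pi" by (auto simp: exp_eq_1)
    then have "d t = of_int n" by (simp add: d_def)
    then show ?thesis by simp
  qed
  have "d constant_on {0..1}"
  proof (rule continuous_discrete_range_constant)
    show "connected {0..1::real}" by simp
    show "continuous_on {0..1} d" unfolding d_def by (intro continuous_intros c1 c2) auto
    fix x assume x: "x \<in> {0..1::real}"
    show "\<exists>e>0. \<forall>y. y \<in> {0..1} \<and> d y \<noteq> d x \<longrightarrow> e \<le> norm (d y - d x)"
    proof (intro exI[of _ 1] conjI allI impI)
      fix y assume y: "y \<in> {0..1} \<and> d y \<noteq> d x"
      obtain a where a: "d x = of_int a" using dI[OF x] Ints_cases by blast
      obtain b where b: "d y = of_int b" using dI y Ints_cases by blast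
      from y a b have "a \<noteq> b" by auto
      then have "1 \<le> \<bar>b - a\<bar>" by linarith
      then show "1 \<le> norm (d y - d x)" using a b
        by (metis of_int_abs of_int_diff of_int_le_iff of_int_1 real_norm_def)
    qed simp
  qed
  then have "d 1 = d 0" by (auto simp: constant_on_def)
  then show ?thesis by (simp add: d_def field_simps)
qed

lemma winding_lift_eq:
  assumes "path \<gamma>" "0 \<notin> path_image \<gamma>"
  shows "winding_lift \<gamma> 0 = Re (winding_number \<gamma> 0)"
proof -
  obtain q where q: "path q" "pathfinish q - pathstart q = 2 * of_real pi * \<i> * winding_number \<gamma> 0"
    "\<And>t. t \<in> {0..1} \<Longrightarrow> \<gamma> t = 0 + exp(q t)"
    using winding_number_as_continuous_log[OF assms] by blast
  have nz: "\<forall>t\<in>{0..1}. \<gamma> t \<noteq> 0" using assms(2) by (auto simp: path_image_def)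
  define \<theta> where "\<theta> t = Im (q t)" for t
  have c: "continuous_on {0..1} \<theta>" unfolding \<theta>_def using q(1) unfolding path_def
    by (intro continuous_intros)
  have e: "\<forall>t\<in>{0..1}. \<gamma> t - 0 = complex_of_real (cmod (\<gamma> t - 0)) * exp (\<i> * complex_of_real (\<theta> t))"
  proof
    fix t assume t: "t \<in> {0..1::real}"
    have "q t = complex_of_real (Re (q t)) + \<i> * complex_of_real (Im (q t))" by (simp add: complex_eq_iff)
    then have "exp (q t) = exp (complex_of_real (Re (q t))) * exp (\<i> * complex_of_real (Im (q t)))"
      by (metis exp_add)
    moreover have "cmod (exp (q t)) = exp (Re (q t))" by simp
    ultimately show "\<gamma> t - 0 = complex_of_real (cmod (\<gamma> t - 0)) * exp (\<i> * complex_of_real (\<theta> t))"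
      using q(3)[OF t] by (simp add: \<theta>_def exp_of_real)
  qed
  have val: "(\<theta> 1 - \<theta> 0) / (2*pi) = Re (winding_number \<gamma> 0)"
  proof -
    have "\<theta> 1 - \<theta> 0 = Im (pathfinish q - pathstart q)" by (simp add: \<theta>_def pathfinish_def pathstart_def)
    also have "\<dots> = 2 * pi * Re (winding_number \<gamma> 0)" using q(2) by simp
    finally show ?thesis by simp
  qed
  show ?thesis unfolding winding_lift_def
  proof (rule the_equality)
    show "\<exists>\<theta>. continuous_on {0..1} \<theta> \<and>
      (\<forall>t\<in>{0..1}. \<gamma> t - 0 = complex_of_real (cmod (\<gamma> t - 0)) * exp (\<i> * complex_of_real (\<theta> t))) \<and>
      Re (winding_number \<gamma> 0) = (\<theta> 1 - \<theta> 0) / (2 * pi)"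
      using c e val by metis
    fix w assume "\<exists>\<theta>'. continuous_on {0..1} \<theta>' \<and>
      (\<forall>t\<in>{0..1}. \<gamma> t - 0 = complex_of_real (cmod (\<gamma> t - 0)) * exp (\<i> * complex_of_real (\<theta>' t))) \<and>
      w = (\<theta>' 1 - \<theta>' 0) / (2 * pi)"
    then obtain \<theta>' where "continuous_on {0..1} \<theta>'"
      "\<forall>t\<in>{0..1}. \<gamma> t - 0 = complex_of_real (cmod (\<gamma> t - 0)) * exp (\<i> * complex_of_real (\<theta>' t))"
      "w = (\<theta>' 1 - \<theta>' 0) / (2 * pi)" by blast
    with lift_unique[OF c this(1) e this(2)] nz val show "w = Re (winding_number \<gamma> 0)" by simp
  qed
qed

lemma winding_mult:
  assumes "path f" "0 \<notin> path_image f" "path g" "0 \<notin> path_image g"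
  shows "winding_number (\<lambda>t. f t * g t) 0 = winding_number f 0 + winding_number g 0"
proof -
  obtain q where q: "path q" "pathfinish q - pathstart q = 2 * of_real pi * \<i> * winding_number f 0"
    "\<And>t. t \<in> {0..1} \<Longrightarrow> f t = 0 + exp(q t)"
    using winding_number_as_continuous_log[OF assms(1,2)] by blast
  obtain q' where q': "path q'" "pathfinish q' - pathstart q' = 2 * of_real pi * \<i> * winding_number g 0"
    "\<And>t. t \<in> {0..1} \<Longrightarrow> g t = 0 + exp(q' t)"
    using winding_number_as_continuous_log[OF assms(3,4)] by blast
  have p: "path (\<lambda>t. q t + q' t)" using q(1) q'(1) unfolding path_def by (intro continuous_intros)
  have "winding_number (\<lambda>t. f t * g t) 0 = winding_number (exp \<circ> (\<lambda>t. q t + q' t)) 0"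
    by (rule winding_number_cong) (simp add: q(3) q'(3) exp_add)
  also have "\<dots> = ((pathfinish q - pathstart q) + (pathfinish q' - pathstart q')) / (2 * of_real pi * \<i>)"
    by (subst winding_number_compose_exp[OF p]) (simp add: pathfinish_def pathstart_def algebra_simps)
  also have "\<dots> = winding_number f 0 + winding_number g 0"
    using q(2) q'(2) by (simp add: field_simps)
  finally show ?thesis .
qed



lemma prod_one_minus:
  assumes "finite S" "\<And>p q. p \<in> S \<Longrightarrow> q \<in> S \<Longrightarrow> p \<noteq> q \<Longrightarrow> b p = 0 \<or> b q = 0"
  shows "(\<Prod>p\<in>S. (1 - b p)) = 1 - (\<Sum>p\<in>S. b p :: 'a::comm_ring_1)"
  using assms
proof (induction S rule: finite_induct)
  case empty then show ?case by simp
next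
  case (insert x S)
  have IH: "(\<Prod>p\<in>S. (1 - b p)) = 1 - (\<Sum>p\<in>S. b p)" using insert by blast
  have "b x * (\<Sum>p\<in>S. b p) = 0"
  proof (cases "b x = 0")
    case False
    then have "\<forall>q\<in>S. b q = 0" using insert.prems insert.hyps by (metis insertCI)
    then show ?thesis by simp
  qed simp
  have "(\<Prod>p\<in>insert x S. (1 - b p)) = (1 - b x) * (1 - (\<Sum>p\<in>S. b p))"
    using insert.hyps IH by simp
  also have "\<dots> = 1 - (b x + (\<Sum>p\<in>S. b p)) + b x * (\<Sum>p\<in>S. b p)" by (simp add: algebra_simps)
  finally show ?case using insert.hyps \<open>b x * (\<Sum>p\<in>S. b p) = 0\<close> by simp
qed

lemma winding_exp_path:
  "winding_number (\<lambda>t. exp (c + b * complex_of_real t)) 0 = b / (2 * of_real pi * \<i>)"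
proof -
  have p: "path (\<lambda>t. c + b * complex_of_real t)" unfolding path_def by (intro continuous_intros)
  have "winding_number (\<lambda>t. exp (c + b * complex_of_real t)) 0 = winding_number (exp \<circ> (\<lambda>t. c + b * complex_of_real t)) 0"
    by (simp add: o_def)
  also have "\<dots> = b / (2 * of_real pi * \<i>)"
    by (subst winding_number_compose_exp[OF p]) (simp add: pathfinish_def pathstart_def)
  finally show ?thesis .
qed

lemma winding_prod:
  assumes "finite S" "\<And>p. p \<in> S \<Longrightarrow> path (h p) \<and> 0 \<notin> path_image (h p)"
  shows "path (\<lambda>t. \<Prod>p\<in>S. h p t) \<and> 0 \<notin> path_image (\<lambda>t. \<Prod>p\<in>S. h p t) \<and>
    winding_number (\<lambda>t. \<Prod>p\<in>S. h p t) 0 = (\<Sum>p\<in>S. winding_number (h p) 0)"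
  using assms
proof (induction S rule: finite_induct)
  case empty
  have "winding_number (\<lambda>t. 1) 0 = winding_number (\<lambda>t. exp (0 + 0 * complex_of_real t)) 0" by simp
  also have "\<dots> = 0" by (subst winding_exp_path) simp
  finally show ?case by (simp add: path_image_def path_def)
next
  case (insert x S)
  have IH: "path (\<lambda>t. \<Prod>p\<in>S. h p t) \<and> 0 \<notin> path_image (\<lambda>t. \<Prod>p\<in>S. h p t) \<and>
    winding_number (\<lambda>t. \<Prod>p\<in>S. h p t) 0 = (\<Sum>p\<in>S. winding_number (h p) 0)" using insert by blast
  have hx: "path (h x)" "0 \<notin> path_image (h x)" using insert by auto
  have eq: "(\<lambda>t. \<Prod>p\<in>insert x S. h p t) = (\<lambda>t. h x t * (\<Prod>p\<in>S. h p t))"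
    using insert.hyps by simp
  have pa: "path (\<lambda>t. h x t * (\<Prod>p\<in>S. h p t))" using hx IH unfolding path_def
    by (intro continuous_on_mult) auto
  have nz: "0 \<notin> path_image (\<lambda>t. h x t * (\<Prod>p\<in>S. h p t))" using hx IH
    by (auto simp: path_image_def)
  show ?case unfolding eq using pa nz winding_mult[OF hx IH[THEN conjunct1] IH[THEN conjunct2, THEN conjunct1]]
    IH insert.hyps by simp
qed



locale petals =
  fixes P :: "'p set" and pn :: "nat \<Rightarrow> 'p \<Rightarrow> 'p" and u :: "'p \<Rightarrow> complex" and \<rho> :: real
  assumes finP: "finite P" and rho_pos: "\<rho> > 0"
    and sep: "\<And>p q. p \<in> P \<Longrightarrow> q \<in> P \<Longrightarrow> p \<noteq> q \<Longrightarrow> 2 * \<rho> \<le> cmod (u p - u q)"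
    and unit: "\<And>p. p \<in> P \<Longrightarrow> cmod (u p) = 1"
    and pn_in: "\<And>n p. p \<in> P \<Longrightarrow> pn n p \<in> P"
    and pn_step: "\<And>n p. p \<in> P \<Longrightarrow> pn 1 (pn n p) = pn (Suc n) p"
begin

definition w :: "'p \<Rightarrow> complex \<Rightarrow> real" where
  "w p z = max 0 (cmod z - cmod (z - complex_of_real (cmod z) * u p) / \<rho>)"

definition FF :: "nat \<Rightarrow> complex \<Rightarrow> complex" where
  "FF n z = 2 ^ n * (\<Sum>p\<in>P. complex_of_real (w p z) * u (pn n p))"

lemma w_nonneg: "w p z \<ge> 0" by (simp add: w_def)

lemma w_le: "w p z \<le> cmod z" using rho_pos by (simp add: w_def)

lemma w_pos: assumes "w p z > 0" shows "cmod (z - complex_of_real (cmod z) * u p) < \<rho> * cmod z"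
proof -
  have "cmod (z - complex_of_real (cmod z) * u p) / \<rho> < cmod z" using assms by (simp add: w_def)
  then show ?thesis using rho_pos by (simp add: pos_divide_less_eq mult.commute)
qed

lemma w_disj: assumes "p \<in> P" "q \<in> P" "p \<noteq> q" "w p z > 0" "w q z > 0" shows False
proof -
  have a: "cmod (z - complex_of_real (cmod z) * u p) < \<rho> * cmod z" using w_pos assms by blast
  have b: "cmod (z - complex_of_real (cmod z) * u q) < \<rho> * cmod z" using w_pos assms by blast
  have e: "(z - complex_of_real (cmod z) * u q) - (z - complex_of_real (cmod z) * u p) = complex_of_real (cmod z) * (u p - u q)"
    by (simp add: algebra_simps)
  have "cmod z * cmod (u p - u q) = cmod ((z - complex_of_real (cmod z) * u q) - (z - complex_of_real (cmod z) * u p))"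
    unfolding e by (simp add: norm_mult)
  also have "\<dots> \<le> cmod (z - complex_of_real (cmod z) * u q) + cmod (z - complex_of_real (cmod z) * u p)"
    by (rule norm_triangle_ineq4)
  also have "\<dots> < 2 * \<rho> * cmod z" using a b by simp
  finally have "cmod z * cmod (u p - u q) < cmod z * (2 * \<rho>)" by (simp add: mult_ac)
  moreover have "cmod z * (2 * \<rho>) \<le> cmod z * cmod (u p - u q)"
    using sep[OF assms(1-3)] by (simp add: mult_left_mono)
  ultimately show False by simp
qed

lemma w_on: assumes "p \<in> P" "r \<ge> 0" shows "w p (complex_of_real r * u p) = r"
  using unit[OF assms(1)] assms(2) by (simp add: w_def norm_mult)

lemma w_off: assumes "p \<in> P" "q \<in> P" "p \<noteq> q" "r \<ge> 0" shows "w p (complex_of_real r * u q) = 0"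
proof -
  have "cmod (complex_of_real r * u q - complex_of_real (cmod (complex_of_real r * u q)) * u p)
      = r * cmod (u q - u p)"
  proof -
    have "cmod (complex_of_real r * u q) = r" using unit[OF assms(2)] assms(4) by (simp add: norm_mult)
    then have "complex_of_real (cmod (complex_of_real r * u q)) = complex_of_real r" by simp
    moreover have "complex_of_real r * u q - complex_of_real r * u p = complex_of_real r * (u q - u p)"
      by (simp add: algebra_simps)
    ultimately show ?thesis using assms(4) by (simp only: norm_mult) simp
  qed
  moreover have "2 * \<rho> \<le> cmod (u q - u p)" using sep[OF assms(2,1)] assms(3) by auto
  ultimately have "r * \<rho> \<le> cmod (complex_of_real r * u q - complex_of_real (cmod (complex_of_real r * u q)) * u p)"
    using assms(4) rho_pos by (smt (verit, ccfv_SIG) mult_left_mono)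
  then show ?thesis using unit[OF assms(2)] assms(4) rho_pos
    by (simp add: w_def norm_mult field_simps)
qed

lemma one_petal:
  "(\<forall>p\<in>P. w p z = 0) \<or> (\<exists>p0\<in>P. w p0 z > 0 \<and> (\<forall>p\<in>P. p \<noteq> p0 \<longrightarrow> w p z = 0))"
proof (cases "\<exists>p0\<in>P. w p0 z > 0")
  case True
  then obtain p0 where "p0 \<in> P" "w p0 z > 0" by blast
  then show ?thesis using w_disj w_nonneg by (metis order_less_le)
next
  case False then show ?thesis using w_nonneg by (metis order_less_le)
qed

lemma sum_single:
  assumes "p0 \<in> P" "\<forall>p\<in>P. p \<noteq> p0 \<longrightarrow> w p z = 0" "S \<subseteq> P"
  shows "(\<Sum>p\<in>S. complex_of_real (w p z) * v p) = (if p0 \<in> S then complex_of_real (w p0 z) * v p0 else 0)"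
proof -
  have fS: "finite S" using finP assms(3) finite_subset by blast
  have "(\<Sum>p\<in>S. complex_of_real (w p z) * v p) = (\<Sum>p\<in>S. if p = p0 then complex_of_real (w p0 z) * v p0 else 0)"
    using assms by (intro sum.cong) auto
  also have "\<dots> = (if p0 \<in> S then complex_of_real (w p0 z) * v p0 else 0)"
    using fS by (simp add: sum.delta)
  finally show ?thesis .
qed

lemma sum_zero:
  assumes "\<forall>p\<in>P. w p z = 0" "S \<subseteq> P"
  shows "(\<Sum>p\<in>S. complex_of_real (w p z) * v p) = 0"
  using assms by (intro sum.neutral) auto

lemma FF_ray: assumes "q \<in> P" "r \<ge> 0"
  shows "FF 1 (complex_of_real r * u q) = 2 * complex_of_real r * u (pn 1 q)"
proof -
  have "\<forall>p\<in>P. p \<noteq> q \<longrightarrow> w p (complex_of_real r * u q) = 0" using w_off assms by blast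
  from sum_single[OF assms(1) this order_refl] show ?thesis
    by (simp add: FF_def w_on assms)
qed

lemma FF0: "FF n 0 = 0" by (simp add: FF_def w_def)

lemma FF_iter: "n \<ge> 1 \<Longrightarrow> (FF 1 ^^ n) z = FF n z"
proof (induction n rule: nat_induct_at_least)
  case base then show ?case by simp
next
  case (Suc n)
  show ?case
  proof (cases "\<forall>p\<in>P. w p z = 0")
    case True
    then have "FF n z = 0" "FF (Suc n) z = 0" by (simp_all add: FF_def sum_zero)
    then show ?thesis using Suc by (simp add: FF0)
  next
    case False
    then obtain p0 where p0: "p0 \<in> P" "w p0 z > 0" "\<forall>p\<in>P. p \<noteq> p0 \<longrightarrow> w p z = 0"
      using one_petal by blast
    have "FF n z = complex_of_real (2^n * w p0 z) * u (pn n p0)"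
      using sum_single[OF p0(1) p0(3) order_refl] p0 by (simp add: FF_def)
    then have "FF 1 (FF n z) = 2 * complex_of_real (2^n * w p0 z) * u (pn 1 (pn n p0))"
      using FF_ray[of "pn n p0" "2^n * w p0 z"] pn_in p0 w_nonneg by simp
    also have "\<dots> = FF (Suc n) z"
      using sum_single[OF p0(1) p0(3) order_refl] p0 pn_step by (simp add: FF_def)
    finally show ?thesis using Suc by simp
  qed
qed

lemma norm_FF: "cmod (FF n z) = 2 ^ n * (\<Sum>p\<in>P. w p z)"
proof (cases "\<forall>p\<in>P. w p z = 0")
  case True then show ?thesis by (simp add: FF_def sum_zero)
next
  case False
  then obtain p0 where p0: "p0 \<in> P" "w p0 z > 0" "\<forall>p\<in>P. p \<noteq> p0 \<longrightarrow> w p z = 0"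
    using one_petal by blast
  have "(\<Sum>p\<in>P. w p z) = w p0 z"
    using p0 finP by (subst sum.remove[of _ p0]) (auto intro: sum.neutral)
  then show ?thesis using sum_single[OF p0(1) p0(3) order_refl] p0 unit pn_in
    by (simp add: FF_def norm_mult w_nonneg norm_power)
qed

lemma cont_w: "continuous_on UNIV (\<lambda>z. complex_of_real (w p z))"
  unfolding w_def using rho_pos by (intro continuous_intros) auto

lemma cont_FF: "continuous_on UNIV (FF n)"
  unfolding FF_def w_def using rho_pos by (intro continuous_intros) auto

end



definition xc :: "real \<Rightarrow> real \<Rightarrow> complex" where
  "xc r t = complex_of_real r * exp (2 * pi * \<i> * complex_of_real t)"

lemma xc_norm: "r \<ge> 0 \<Longrightarrow> cmod (xc r t) = r"
  by (simp add: xc_def norm_mult)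

lemma xc_nz: "r > 0 \<Longrightarrow> xc r t \<noteq> 0" by (simp add: xc_def)

lemma xc_loop: "xc r 1 = xc r 0"
  by (simp add: xc_def)

lemma xc_cont: "continuous_on S (xc r)"
  unfolding xc_def by (intro continuous_intros)

lemma xc_wind: assumes "r > 0" shows "winding_number (xc r) 0 = 1"
proof -
  have "xc r = (\<lambda>t. exp (Ln (complex_of_real r) + (2 * pi * \<i>) * complex_of_real t))"
    using assms by (auto simp: xc_def exp_add fun_eq_iff mult_ac)
  then show ?thesis by (simp add: winding_exp_path)
qed

lemma loop_comp: "pathfinish (\<lambda>t. G (xc r t)) = pathstart (\<lambda>t. G (xc r t))"
  by (simp add: pathfinish_def pathstart_def xc_loop)

lemma seg_nz: "0 \<notin> closed_segment a b \<Longrightarrow> a \<noteq> 0 \<and> b \<noteq> 0"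
  by (metis ends_in_segment(1) ends_in_segment(2))

lemma seg_point: "(1 - s) *\<^sub>R a + s *\<^sub>R b = (1 - complex_of_real s) * a + complex_of_real s * (b::complex)"
  by (simp add: scaleR_conv_of_real)

lemma lin0: "(1 - c) * z + c * z = (z::complex)" by (simp add: algebra_simps)
lemma lin1: "(1 - c) * (z - X) + c * (z - X) = (z - X::complex)" by (simp add: algebra_simps)
lemma lin2: "(1 - c) * (z - 2^n * 0) + c * (z - X) = (z - c * X::complex)" by (simp add: algebra_simps)

context petals begin

lemma zero_ray:
  assumes "p0 \<in> P" "q \<in> P" "w p0 z > 0" "c \<ge> 0" "z = complex_of_real c * u q"
  shows "q = p0 \<and> w p0 z = c"
proof (cases "q = p0")
  case True then show ?thesis using w_on assms by simp
next
  case False then have "w p0 z = 0" using w_off assms by (metis)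
  then show ?thesis using assms by simp
qed

lemma seg1:
  assumes n: "n \<ge> 1" and z: "z \<noteq> 0"
  shows "0 \<notin> closed_segment (z - 2^n * (\<Sum>p\<in>{p\<in>P. pn n p = p}. complex_of_real (w p z) * u (pn n p))) (z - FF n z)"
proof
  assume "0 \<in> closed_segment (z - 2^n * (\<Sum>p\<in>{p\<in>P. pn n p = p}. complex_of_real (w p z) * u (pn n p))) (z - FF n z)"
  then obtain s where s: "0 \<le> s" "s \<le> 1"
    and s0: "0 = (1 - complex_of_real s) * (z - 2^n * (\<Sum>p\<in>{p\<in>P. pn n p = p}. complex_of_real (w p z) * u (pn n p))) + complex_of_real s * (z - FF n z)"
    unfolding closed_segment_def seg_point by blast
  have sub: "{p\<in>P. pn n p = p} \<subseteq> P" by blast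
  show False
  proof (cases "\<forall>p\<in>P. w p z = 0")
    case True
    have "FF n z = 0" using sum_zero[OF True order_refl] by (simp add: FF_def)
    then show False using s0 z sum_zero[OF True sub] by (simp add: lin0)
  next
    case False
    then obtain p0 where p0: "p0 \<in> P" "w p0 z > 0" "\<forall>p\<in>P. p \<noteq> p0 \<longrightarrow> w p z = 0"
      using one_petal by blast
    have FFe: "FF n z = 2^n * (complex_of_real (w p0 z) * u (pn n p0))"
      using sum_single[OF p0(1) p0(3) order_refl] p0(1) by (simp add: FF_def)
    have qP: "pn n p0 \<in> P" using pn_in p0 by blast
    have "(2::real)^1 \<le> 2^n" using n by (intro power_increasing) auto
    then have n1: "(2::real)^n \<noteq> 1" by auto
    show False
    proof (cases "pn n p0 = p0")
      case True
      have "(\<Sum>p\<in>{p\<in>P. pn n p = p}. complex_of_real (w p z) * u (pn n p)) = complex_of_real (w p0 z) * u (pn n p0)"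
        using sum_single[OF p0(1) p0(3) sub] True p0(1) by simp
      then have "0 = z - 2^n * (complex_of_real (w p0 z) * u (pn n p0))"
        using s0 FFe by (simp only: lin1)
      then have "z = complex_of_real (2^n * w p0 z) * u (pn n p0)" by (simp add: mult.assoc)
      from zero_ray[OF p0(1) qP p0(2) _ this] w_nonneg have "w p0 z = 2^n * w p0 z" by simp
      then show False using p0(2) n1 by simp
    next
      case False
      have "(\<Sum>p\<in>{p\<in>P. pn n p = p}. complex_of_real (w p z) * u (pn n p)) = 0"
        using sum_single[OF p0(1) p0(3) sub] False by simp
      then have "0 = z - complex_of_real s * (2^n * (complex_of_real (w p0 z) * u (pn n p0)))"
        using s0 FFe by (simp only: lin2)
      then have "z = complex_of_real (s * 2^n * w p0 z) * u (pn n p0)" by (simp add: mult.assoc)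
      from zero_ray[OF p0(1) qP p0(2) _ this] w_nonneg s False show False by simp
    qed
  qed
qed

end



lemma lin3: "(1-c)*(1 - A*a*y/x) + c*(1 - A*b*y/x) = 1 - A*((1-c)*a + c*b)*y/(x::complex)"
  by (simp add: divide_inverse algebra_simps)
lemma lin4: "(1-c)*(1 - B) + c*(-B) = (1-c) - (B::complex)"
  by (simp add: algebra_simps)

context petals begin

lemma cont_wx: "continuous_on S (\<lambda>t. complex_of_real (w p (xc r t)))"
  by (rule continuous_on_compose2[OF cont_w xc_cont]) auto

lemma wind_h:
  assumes n: "n \<ge> 1" and r: "r > 0" and p: "p \<in> P"
  defines "h \<equiv> (\<lambda>t. 1 - 2^n * complex_of_real (w p (xc r t)) * u p / xc r t)"
  shows "path h \<and> 0 \<notin> path_image h \<and> winding_number h 0 = -1"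
proof -
  define k1 where "k1 = (\<lambda>t. 1 - 2^n * complex_of_real r * u p / xc r t)"
  define k2 where "k2 = (\<lambda>t. - (2^n * complex_of_real r * u p / xc r t))"
  have nz: "\<And>t. xc r t \<noteq> 0" using xc_nz r by blast
  have "(2::real)^1 \<le> 2^n" using n by (intro power_increasing) auto
  then have n2: "(2::real)^n \<ge> 2" by simp
  have up: "cmod (u p) = 1" using unit p by blast
  have ph: "path h" unfolding h_def path_def using nz
    by (intro continuous_intros cont_wx xc_cont) auto
  have pk1: "path k1" unfolding k1_def path_def using nz
    by (intro continuous_intros xc_cont) auto
  have pk2: "path k2" unfolding k2_def path_def using nz
    by (intro continuous_intros xc_cont) auto
  have sega: "0 \<notin> closed_segment (h t) (k1 t)" for t
  proof
    assume "0 \<in> closed_segment (h t) (k1 t)"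
    then obtain s where s: "0 \<le> s" "s \<le> 1"
      and s0: "0 = (1 - complex_of_real s) * h t + complex_of_real s * k1 t"
      unfolding closed_segment_def seg_point by blast
    define \<mu> where "\<mu> = (1 - s) * w p (xc r t) + s * r"
    have mu0: "\<mu> \<ge> 0" unfolding \<mu>_def using s r w_nonneg by (intro add_nonneg_nonneg mult_nonneg_nonneg) auto
    have "0 = 1 - 2^n * complex_of_real \<mu> * u p / xc r t"
      using s0 unfolding h_def k1_def \<mu>_def by (simp add: lin3)
    then have "xc r t = complex_of_real (2^n * \<mu>) * u p" using nz[of t]
      by (simp add: field_simps)
    moreover have "cmod (xc r t) = r" using xc_norm r by simp
    ultimately have e1: "w p (xc r t) = 2^n * \<mu>" and e2: "r = 2^n * \<mu>"
      using w_on[OF p, of "2^n * \<mu>"] mu0 up by (auto simp: norm_mult norm_power)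
    then have wr: "w p (xc r t) = r" by simp
    have "\<mu> = r" unfolding \<mu>_def wr by (simp add: algebra_simps)
    then have "r * 2^n = r * 1" using e2 by simp
    then have "(2::real)^n = 1" using r by (metis mult_cancel_left less_irrefl)
    then show False using n2 by simp
  qed
  have segb: "0 \<notin> closed_segment (k1 t) (k2 t)" for t
  proof
    assume "0 \<in> closed_segment (k1 t) (k2 t)"
    then obtain s where s: "0 \<le> s" "s \<le> 1"
      and s0: "0 = (1 - complex_of_real s) * k1 t + complex_of_real s * k2 t"
      unfolding closed_segment_def seg_point by blast
    have "0 = (1 - complex_of_real s) - 2^n * complex_of_real r * u p / xc r t"
      using s0 unfolding k1_def k2_def by (simp only: lin4)
    then have "cmod (2^n * complex_of_real r * u p / xc r t) = cmod (1 - complex_of_real s)" by simp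
    moreover have "cmod (2^n * complex_of_real r * u p / xc r t) = 2^n"
      using xc_norm r up by (simp add: norm_mult norm_divide norm_power)
    moreover have "cmod (1 - complex_of_real s) = 1 - s" using s
      by (metis abs_of_nonneg diff_ge_0_iff_ge norm_of_real of_real_1 of_real_diff)
    ultimately show False using n2 s by simp
  qed
  have k2e: "k2 = (\<lambda>t. exp (Ln (- (2^n * u p)) + (- (2 * pi * \<i>)) * complex_of_real t))"
  proof
    fix t
    have "u p \<noteq> 0" using up by auto
    then have eLn: "exp (Ln (- (2^n * u p))) = - (2^n * u p)" by (intro exp_Ln) simp
    have e1: "exp (Ln (- (2^n * u p)) + (- (2 * pi * \<i>)) * complex_of_real t) = - (2^n * u p) / exp (2 * pi * \<i> * complex_of_real t)"
      by (simp only: exp_add eLn mult_minus_left exp_minus divide_inverse)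
    have e2: "k2 t = - (2^n * u p) / exp (2 * pi * \<i> * complex_of_real t)"
      unfolding k2_def xc_def using r by (simp add: field_simps)
    show "k2 t = exp (Ln (- (2^n * u p)) + (- (2 * pi * \<i>)) * complex_of_real t)"
      using e1 e2 by simp
  qed
  have wk2: "winding_number k2 0 = -1"
    unfolding k2e by (subst winding_exp_path) simp
  have "winding_number h 0 = winding_number k1 0"
    by (rule winding_number_loops_linear_eq[OF pk1 ph]) (use sega in \<open>auto simp: h_def k1_def pathfinish_def pathstart_def xc_loop closed_segment_commute\<close>)
  also have "\<dots> = winding_number k2 0"
    by (rule winding_number_loops_linear_eq[OF pk2 pk1]) (use segb in \<open>auto simp: k2_def k1_def pathfinish_def pathstart_def xc_loop closed_segment_commute\<close>)
  finally have "winding_number h 0 = -1" using wk2 by simp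
  moreover have "0 \<notin> path_image h" using sega seg_nz by (metis imageE path_image_def)
  ultimately show ?thesis using ph by blast
qed

end



context petals begin

lemma wind_FF:
  assumes n: "n \<ge> 1" and r: "r > 0"
  defines "\<gamma> \<equiv> (\<lambda>t. xc r t - FF n (xc r t))"
  shows "path \<gamma> \<and> 0 \<notin> path_image \<gamma> \<and> winding_number \<gamma> 0 = 1 - of_nat (card {p\<in>P. pn n p = p})"
proof -
  define Fx where "Fx = {p\<in>P. pn n p = p}"
  have Fx: "Fx \<subseteq> P" "finite Fx" using finP by (auto simp: Fx_def)
  define h where "h p = (\<lambda>t. 1 - 2^n * complex_of_real (w p (xc r t)) * u p / xc r t)" for p
  define g0 where "g0 = (\<lambda>t. xc r t - 2^n * (\<Sum>p\<in>Fx. complex_of_real (w p (xc r t)) * u (pn n p)))"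
  have nz: "\<And>t. xc r t \<noteq> 0" using xc_nz r by blast
  have cFF: "continuous_on {0..1} (\<lambda>t. FF n (xc r t))"
    by (rule continuous_on_compose2[OF cont_FF xc_cont]) auto
  have pg: "path \<gamma>" unfolding \<gamma>_def path_def by (intro continuous_intros xc_cont cFF)
  have pg0: "path g0" unfolding g0_def path_def by (intro continuous_intros xc_cont cont_wx)
  have seg: "0 \<notin> closed_segment (g0 t) (\<gamma> t)" for t
    unfolding g0_def \<gamma>_def Fx_def using seg1[OF n nz] by blast
  have w1: "winding_number \<gamma> 0 = winding_number g0 0"
    by (rule winding_number_loops_linear_eq[OF pg0 pg])
       (use seg in \<open>auto simp: pathfinish_def pathstart_def xc_loop \<gamma>_def g0_def\<close>)
  have hp: "\<And>p. p \<in> Fx \<Longrightarrow> path (h p) \<and> 0 \<notin> path_image (h p) \<and> winding_number (h p) 0 = -1"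
    using wind_h[OF n r] Fx(1) unfolding h_def by blast
  from winding_prod[OF Fx(2), of h] hp
  have pr: "path (\<lambda>t. \<Prod>p\<in>Fx. h p t)" "0 \<notin> path_image (\<lambda>t. \<Prod>p\<in>Fx. h p t)"
    "winding_number (\<lambda>t. \<Prod>p\<in>Fx. h p t) 0 = (\<Sum>p\<in>Fx. -1)" by auto
  have g0e: "g0 t = xc r t * (\<Prod>p\<in>Fx. h p t)" for t
  proof -
    define b where "b p = 2^n * complex_of_real (w p (xc r t)) * u p / xc r t" for p
    have "(\<Prod>p\<in>Fx. (1 - b p)) = 1 - (\<Sum>p\<in>Fx. b p)"
    proof (rule prod_one_minus[OF Fx(2)])
      fix p q assume "p \<in> Fx" "q \<in> Fx" "p \<noteq> q"
      then have "\<not> (w p (xc r t) > 0 \<and> w q (xc r t) > 0)" using w_disj Fx(1) by blast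
      then have "w p (xc r t) = 0 \<or> w q (xc r t) = 0" using w_nonneg by (metis order_less_le)
      then show "b p = 0 \<or> b q = 0" unfolding b_def by auto
    qed
    moreover have "xc r t * (\<Sum>p\<in>Fx. b p) = 2^n * (\<Sum>p\<in>Fx. complex_of_real (w p (xc r t)) * u (pn n p))"
      unfolding b_def using nz[of t]
      by (simp add: sum_distrib_left Fx_def mult_ac)
    ultimately show ?thesis unfolding g0_def h_def b_def[symmetric]
      by (simp add: right_diff_distrib)
  qed
  have "winding_number g0 0 = winding_number (\<lambda>t. xc r t * (\<Prod>p\<in>Fx. h p t)) 0"
    by (rule winding_number_cong) (simp add: g0e)
  also have "\<dots> = winding_number (xc r) 0 + winding_number (\<lambda>t. \<Prod>p\<in>Fx. h p t) 0"
    by (rule winding_mult[OF _ _ pr(1,2)]) (auto simp: path_def xc_cont path_image_def nz)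
  also have "\<dots> = 1 - of_nat (card Fx)" using pr(3) xc_wind[OF r] by simp
  finally have "winding_number \<gamma> 0 = 1 - of_nat (card Fx)" using w1 by simp
  moreover have "0 \<notin> path_image \<gamma>" using seg seg_nz by (metis imageE path_image_def)
  ultimately show ?thesis using pg Fx_def by blast
qed

end


context petals begin

lemma fp_index_FF:
  assumes n: "n \<ge> 1"
  shows "fp_index (FF 1 ^^ n) 0 = 1 - int (card {p\<in>P. pn n p = p})"
proof -
  let ?k = "1 - int (card {p\<in>P. pn n p = p})"
  have key: "winding_lift (\<lambda>t. let x = 0 + complex_of_real r * exp (2 * pi * \<i> * complex_of_real t) in x - (FF 1 ^^ n) x) 0
      = real_of_int ?k" if r: "r > 0" for r
  proof -
    have e: "(\<lambda>t. let x = 0 + complex_of_real r * exp (2 * pi * \<i> * complex_of_real t) in x - (FF 1 ^^ n) x)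
        = (\<lambda>t. xc r t - FF n (xc r t))"
      unfolding FF_iter[OF n] by (simp add: xc_def Let_def)
    from wind_FF[OF n r] show ?thesis unfolding e
      by (simp add: winding_lift_eq)
  qed
  show ?thesis unfolding fp_index_def
  proof (rule the_equality)
    show "\<exists>\<epsilon>>0. \<forall>r. 0 < r \<and> r < \<epsilon> \<longrightarrow>
      winding_lift (\<lambda>t. let x = 0 + complex_of_real r * exp (2 * pi * \<i> * complex_of_real t) in x - (FF 1 ^^ n) x) 0
        = real_of_int ?k"
      using key by (intro exI[of _ 1]) auto
    fix k assume "\<exists>\<epsilon>>0. \<forall>r. 0 < r \<and> r < \<epsilon> \<longrightarrow>
      winding_lift (\<lambda>t. let x = 0 + complex_of_real r * exp (2 * pi * \<i> * complex_of_real t) in x - (FF 1 ^^ n) x) 0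
        = real_of_int k"
    then obtain \<epsilon> where \<epsilon>: "\<epsilon> > 0" "\<forall>r. 0 < r \<and> r < \<epsilon> \<longrightarrow>
      winding_lift (\<lambda>t. let x = 0 + complex_of_real r * exp (2 * pi * \<i> * complex_of_real t) in x - (FF 1 ^^ n) x) 0
        = real_of_int k" by blast
    have "real_of_int k = real_of_int ?k" using \<epsilon>(2)[rule_format, of "\<epsilon>/2"] \<epsilon>(1) key[of "\<epsilon>/2"] by simp
    then show "k = ?k" by (simp only: of_int_eq_iff)
  qed
qed

lemma isolated_FF: "isolated_invariant_set (FF 1) {0}"
  unfolding isolated_invariant_set_def
proof (intro exI[of _ "cball 0 1"] conjI)
  show "compact (cball (0::complex) 1)" by simp
  show "{0} \<subseteq> interior (cball (0::complex) 1)" by simp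
  show "{0} = Inv (FF 1) (cball 0 1)"
  proof
    show "{0} \<subseteq> Inv (FF 1) (cball 0 1)"
      unfolding Inv_def by (auto intro!: exI[of _ "\<lambda>_. 0"] simp: FF0)
    show "Inv (FF 1) (cball 0 1) \<subseteq> {0}"
    proof
      fix x assume "x \<in> Inv (FF 1) (cball 0 1)"
      then obtain s :: "int \<Rightarrow> complex" where s0: "s 0 = x" and sNf: "\<forall>n. s n \<in> cball 0 1 \<and> FF 1 (s n) = s (n + 1)"
        unfolding Inv_def by blast
      have sN: "\<And>n. s n \<in> cball 0 1" and sf: "\<And>n. FF 1 (s n) = s (n + 1)" using sNf by auto
      define y where "y = s (-1)"
      have it: "s (int m - 1) = (FF 1 ^^ m) y" if "m \<ge> 1" for m
        using that
      proof (induction m rule: nat_induct_at_least)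
        case base then show ?case using sf[of "-1"] by (simp add: y_def)
      next
        case (Suc m)
        have "s (int (Suc m) - 1) = FF 1 (s (int m - 1))" using sf[of "int m - 1"] by simp
        then show ?case using Suc by simp
      qed
      have bnd: "2 ^ m * (\<Sum>p\<in>P. w p y) \<le> 1" if "m \<ge> 1" for m
      proof -
        have "cmod ((FF 1 ^^ m) y) \<le> 1" using sN[of "int m - 1"] it[OF that] by (simp add: dist_norm)
        then show ?thesis using FF_iter[OF that] norm_FF by simp
      qed
      have S0: "(\<Sum>p\<in>P. w p y) = 0"
      proof (rule ccontr)
        assume "(\<Sum>p\<in>P. w p y) \<noteq> 0"
        moreover have "(\<Sum>p\<in>P. w p y) \<ge> 0" by (intro sum_nonneg w_nonneg)
        ultimately have pos: "(\<Sum>p\<in>P. w p y) > 0" by simp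
        obtain m where m: "1 / (\<Sum>p\<in>P. w p y) < 2 ^ m" using real_arch_pow[of 2] by auto
        have "(2::real) ^ m \<le> 2 ^ Suc m" by simp
        with m have "1 < 2 ^ Suc m * (\<Sum>p\<in>P. w p y)" using pos by (simp add: field_simps)
        with bnd[of "Suc m"] show False by simp
      qed
      have "cmod (FF 1 y) = 0" using norm_FF[of 1 y] S0 by simp
      then show "x \<in> {0}" using sf[of "-1"] s0 by (simp add: y_def)
    qed
  qed
qed

end


definition mob :: "nat \<Rightarrow> complex" where
  "mob t = (1 + \<i> * of_nat t) / (1 - \<i> * of_nat t)"

lemma mob_den: "1 - \<i> * of_nat t \<noteq> 0"
proof
  assume "1 - \<i> * of_nat t = 0"
  then have "Re (1 - \<i> * of_nat t) = 0" by simp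
  then show False by simp
qed

lemma mob_unit: "cmod (mob t) = 1"
proof -
  have "cmod (1 + \<i> * of_nat t) = cmod (1 - \<i> * of_nat t)"
    by (simp add: cmod_def)
  then show ?thesis using mob_den[of t] by (simp add: mob_def norm_divide)
qed

lemma mob_inj: "mob s = mob t \<Longrightarrow> s = t"
proof -
  assume "mob s = mob t"
  then have "(1 + \<i> * of_nat s) * (1 - \<i> * of_nat t) = (1 + \<i> * of_nat t) * (1 - \<i> * of_nat s)"
    using mob_den[of s] mob_den[of t] by (simp add: mob_def field_simps)
  then have "Im ((1 + \<i> * of_nat s) * (1 - \<i> * of_nat t)) = Im ((1 + \<i> * of_nat t) * (1 - \<i> * of_nat s))"
    by simp
  then show "s = t" by simp
qed

lemma mod_fix: "m < (k::nat) \<Longrightarrow> ((m + n) mod k = m) \<longleftrightarrow> k dvd n"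
proof
  assume mk: "m < k" and e: "(m + n) mod k = m"
  then have "m mod k = (m + n) mod k" by simp
  then have "k dvd (m + n) - m" using mod_eq_dvd_iff_nat[of m "m+n" k] by simp
  then show "k dvd n" by simp
next
  assume mk: "m < k" and "k dvd n"
  then show "(m + n) mod k = m" by (simp add: mod_add_right_eq[symmetric])
qed

theorem mainTheorem8:
  fixes F :: "nat set" and a :: "nat \<Rightarrow> nat"
  assumes "finite F" and "\<forall>k\<in>F. a k > 0"
  shows "\<exists>f :: complex \<Rightarrow> complex. continuous_on UNIV f \<and>
           (\<exists>p. f p = p \<and> isolated_invariant_set f {p} \<and>
              (\<forall>n\<ge>1. fp_index (f ^^ n) p = 1 - (\<Sum>k\<in>{k\<in>F. k dvd n}. int k * int (a k))))"
proof -
  define P where "P = Sigma F (\<lambda>k. {..<a k} \<times> {..<k})"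
  define pn where "pn n = (\<lambda>(k, i, m). (k, i::nat, (m + n) mod k))" for n :: nat
  define u where "u p = mob (to_nat (p :: nat \<times> nat \<times> nat))" for p
  define D where "D = (\<lambda>(p, q). cmod (u p - u q)) ` {(p, q). p \<in> P \<and> q \<in> P \<and> p \<noteq> q}"
  define \<rho> where "\<rho> = Min (insert 2 D) / 2"
  have finP: "finite P" unfolding P_def using assms(1) by (intro finite_SigmaI) auto
  have finD: "finite D" unfolding D_def
    by (rule finite_imageI, rule finite_subset[of _ "P \<times> P"]) (use finP in auto)
  have Dpos0: "\<forall>pq\<in>{(p, q). p \<in> P \<and> q \<in> P \<and> p \<noteq> q}. (\<lambda>(p, q). cmod (u p - u q)) pq > 0"
  proof
    fix pq assume "pq \<in> {(p, q). p \<in> P \<and> q \<in> P \<and> p \<noteq> q}"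
    then obtain p q where pq: "pq = (p, q)" "p \<noteq> q" by (cases pq) blast
    have "u p \<noteq> u q"
    proof
      assume "u p = u q"
      then have "to_nat p = to_nat q" unfolding u_def by (rule mob_inj)
      then have "p = q" by (rule injD[OF inj_to_nat])
      then show False using \<open>p \<noteq> q\<close> by simp
    qed
    then show "(\<lambda>(p, q). cmod (u p - u q)) pq > 0" using pq by simp
  qed
  have Dpos: "\<forall>d\<in>D. d > 0"
  proof
    fix d assume "d \<in> D"
    then obtain pq where "pq \<in> {(p, q). p \<in> P \<and> q \<in> P \<and> p \<noteq> q}" "d = (\<lambda>(p, q). cmod (u p - u q)) pq"
      unfolding D_def by (rule imageE)
    then have "(\<lambda>(p, q). cmod (u p - u q)) pq > 0" "d = (\<lambda>(p, q). cmod (u p - u q)) pq"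
      using Dpos0 by blast+
    then show "d > 0" by (simp only:)
  qed
  interpret petals P pn u \<rho>
  proof
    show "finite P" by (rule finP)
    show "\<rho> > 0" unfolding \<rho>_def using finD Dpos by (simp add: Min_gr_iff)
    fix p q assume "p \<in> P" "q \<in> P" "p \<noteq> q"
    then have "cmod (u p - u q) \<in> insert 2 D" unfolding D_def by auto
    then show "2 * \<rho> \<le> cmod (u p - u q)" unfolding \<rho>_def using finD by simp
  next
    fix p show "cmod (u p) = 1" unfolding u_def by (rule mob_unit)
  next
    fix n p assume "p \<in> P"
    then show "pn n p \<in> P" unfolding P_def pn_def by auto
  next
    fix n p assume "p \<in> P"
    then show "pn 1 (pn n p) = pn (Suc n) p" unfolding P_def pn_def by (auto simp: mod_Suc_eq)
  qed
  have card: "int (card {p\<in>P. pn n p = p}) = (\<Sum>k\<in>{k\<in>F. k dvd n}. int k * int (a k))" for n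
  proof -
    have "{p\<in>P. pn n p = p} = Sigma {k\<in>F. k dvd n} (\<lambda>k. {..<a k} \<times> {..<k})"
      unfolding P_def pn_def using mod_fix by auto
    then have "card {p\<in>P. pn n p = p} = (\<Sum>k\<in>{k\<in>F. k dvd n}. card ({..<a k} \<times> {..<k}))"
      using assms(1) by (simp add: card_SigmaI)
    also have "\<dots> = (\<Sum>k\<in>{k\<in>F. k dvd n}. k * a k)" by (simp add: card_cartesian_product mult.commute)
    finally show ?thesis by simp
  qed
  show ?thesis
  proof (intro exI[of _ "FF 1"] conjI exI[of _ 0] allI impI)
    show "continuous_on UNIV (FF 1)" by (rule cont_FF)
    show "FF 1 0 = 0" by (rule FF0)
    show "isolated_invariant_set (FF 1) {0}" by (rule isolated_FF)
    fix n :: nat assume "n \<ge> 1"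
    then show "fp_index (FF 1 ^^ n) 0 = 1 - (\<Sum>k\<in>{k\<in>F. k dvd n}. int k * int (a k))"
      using fp_index_FF card by simp
  qed
qed

end
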